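(* Let $\gamma>0$, $A:=K+\gamma M$, $A^{\rm aux}:=G^TAJ^{\rm grad}_{\varepsilon,\bm\beta}$, and let $S^{\rm aux}$ be a translation-invariant node operator with $S^{\rm aux}\varphi(\bm\theta)_N=s(\bm\theta)\varphi(\bm\theta)_N$. Fix $\bm\theta\in[-\pi/2,3\pi/2)^2\setminus\{(0,0)\}$. Then $A^{\rm aux}$ acts on $\mathrm{span}\{\varphi(\bm\theta)_N\}$ as multiplication by the nonzero number $\tfrac{2\gamma}{3}D(\bm\theta)$, and the operator $S^{\rm kc}:=I-J^{\rm grad}_{\varepsilon,\bm\beta}(I-S^{\rm aux})(A^{\rm aux})^{-1}G^TA$, restricted to $F_E(\bm\theta)$ (with $(A^{\rm aux})^{-1}$ the inverse of $A^{\rm aux}$ on $\mathrm{span}\{\varphi(\bm\theta)_N\}$), satisfies $$S^{\rm kc}\psi_J(\bm\theta)_E=s(\bm\theta)\psi_J(\bm\theta)_E,\qquad S^{\rm kc}\psi_s(\bm\theta)_E=\frac{2(s(\bm\theta)-1)s_1s_2(\tilde c_2-\tilde c_1)}{D(\bm\theta)}\psi_J(\bm\theta)_E+\psi_s(\bm\theta)_E,$$ where $D(\bm\theta)=(2+\tilde c_2)s_1^2\sigma_1+(2+\tilde c_1)s_2^2\sigma_2-\tfrac{i}{2}\tilde s_1b_1(2+\tilde c_2)-\tfrac{i}{2}\tilde s_2b_2(2+\tilde c_1)$.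
   Context: Fix constants $\varepsilon>0$, $\bm{\beta}=(\beta_1,\beta_2)\in\mathbb{R}^2$, $h>0$, and set $b_j:=\beta_j h$. The Bernoulli function is $B_\varepsilon(s):=\varepsilon\big/\int_0^1 e^{sx/\varepsilon}\,dx$. Write $\sigma_j:=B_\varepsilon(b_j)+B_\varepsilon(-b_j)$, $s_j=\sin(\theta_j/2)$, $\tilde s_j=\sin\theta_j$, $\tilde c_j=\cos\theta_j$. Index sets: nodes $N=\mathbb{Z}^2$, horizontal edges $E_1=(\mathbb{Z}+\frac12)\times\mathbb{Z}$, vertical edges $E_2=\mathbb{Z}\times(\mathbb{Z}+\frac12)$, $E=E_1\cup E_2$, faces $F=(\mathbb{Z}+\frac12)^2$; grid functions are complex-valued functions on these sets; $e_1=(1,0)$, $e_2=(0,1)$. $J^{\rm grad}_{\varepsilon,\bm\beta}$: $(J^{\rm grad}_{\varepsilon,\bm\beta}f)_{\bm k}=-B_\varepsilon(b_j)f_{\bm k-e_j/2}+B_\varepsilon(-b_j)f_{\bm k+e_j/2}$ for $\bm k\in E_j$. $G^T$: $(G^Tg)_{\bm n}=\sum_{j=1}^2\big(g_{\bm n-e_j/2}-g_{\bm n+e_j/2}\big)$. $C^T$: $(C^Tf)_{\bm k}=f_{\bm k+e_2/2}-f_{\bm k-e_2/2}$ for $\bm k\in E_1$, $(C^Tf)_{\bm k}=f_{\bm k-e_1/2}-f_{\bm k+e_1/2}$ for $\bm k\in E_2$. The edge operator $K$ is defined, writing $B=B_\varepsilon$, by: for $\bm k\in E_1$, $h^2(Kf)_{\bm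 k}=\sigma_2f_{\bm k}-B(-b_2)f_{\bm k+e_2}-B(b_2)f_{\bm k-e_2}-B(b_1)f_{\bm k+(-\frac12,\frac12)}+B(-b_1)f_{\bm k+(\frac12,\frac12)}+B(b_1)f_{\bm k+(-\frac12,-\frac12)}-B(-b_1)f_{\bm k+(\frac12,-\frac12)}$; for $\bm k\in E_2$, $h^2(Kf)_{\bm k}=\sigma_1f_{\bm k}-B(b_1)f_{\bm k-e_1}-B(-b_1)f_{\bm k+e_1}-B(-b_2)f_{\bm k+(-\frac12,\frac12)}+B(-b_2)f_{\bm k+(\frac12,\frac12)}+B(b_2)f_{\bm k+(-\frac12,-\frac12)}-B(b_2)f_{\bm k+(\frac12,-\frac12)}$. The edge mass operator $M$: $(Mf)_{\bm k}=\frac23f_{\bm k}+\frac16(f_{\bm k+e_2}+f_{\bm k-e_2})$ for $\bm k\in E_1$, and $(Mf)_{\bm k}=\frac23f_{\bm k}+\frac16(f_{\bm k+e_1}+f_{\bm k-e_1})$ for $\bm k\in E_2$. Fourier modes: $\varphi(\bm\theta)_S(\bm k):=e^{i\bm\theta\cdot\bm k}$ for $\bm k\in S\in\{N,E,F\}$; $\varphi_j(\bm\theta)_E:=\chi_{E_j}\varphi(\bm\theta)_E$; $F_E(\bm\theta):=\mathrm{span}\{\varphi_1(\bm\theta)_E,\varphi_2(\bm\theta)_E\}$; $\psi_J(\bm\theta)_E:=J^{\rm grad}_{\varepsilon,\bm\beta}\varphi(\bm\theta)_N$, $\psi_s(\bm\theta)_E:=C^T\varphi(\bm\theta)_F$.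 *)

theory Defs
  imports "HOL-Analysis.Analysis"
begin

text \<open>A grid function is a complex-valued
function on the plane; only its values on the relevant index set matter, and every operator
below returns 0 outside its target index set.\<close>

type_synonym gridfun = "real \<times> real \<Rightarrow> complex"

definition Bern :: "real \<Rightarrow> real \<Rightarrow> real" where
  "Bern \<epsilon> s = \<epsilon> / integral {0..1} (\<lambda>x. exp (s * x / \<epsilon>))"

definition Nset :: "(real \<times> real) set" where
  "Nset = {k. fst k \<in> \<int> \<and> snd k \<in> \<int>}"
definition E1set :: "(real \<times> real) set" where
  "E1set = {k. fst k - 1/2 \<in> \<int> \<and> snd k \<in> \<int>}"
definition E2set :: "(real \<times> real) set" where
  "E2set = {k. fst k \<in> \<int> \<and> snd k - 1/2 \<in> \<int>}"
definition Eset :: "(real \<times> real) set" where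
  "Eset = E1set \<union> E2set"
definition Fset :: "(real \<times> real) set" where
  "Fset = {k. fst k - 1/2 \<in> \<int> \<and> snd k - 1/2 \<in> \<int>}"

definition sh :: "real \<times> real \<Rightarrow> real \<Rightarrow> real \<Rightarrow> real \<times> real" where
  "sh k a c = (fst k + a, snd k + c)"

definition Jgrad :: "real \<Rightarrow> real \<Rightarrow> real \<Rightarrow> real \<Rightarrow> gridfun \<Rightarrow> gridfun" where
  "Jgrad \<epsilon> \<beta>1 \<beta>2 h f k =
     (if k \<in> E1set then - of_real (Bern \<epsilon> (\<beta>1*h)) * f (sh k (-1/2) 0)
                        + of_real (Bern \<epsilon> (-(\<beta>1*h))) * f (sh k (1/2) 0)
      else if k \<in> E2set then - of_real (Bern \<epsilon> (\<beta>2*h)) * f (sh k 0 (-1/2))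
                        + of_real (Bern \<epsilon> (-(\<beta>2*h))) * f (sh k 0 (1/2))
      else 0)"

definition GT :: "gridfun \<Rightarrow> gridfun" where
  "GT g n = (if n \<in> Nset then (g (sh n (-1/2) 0) - g (sh n (1/2) 0))
                            + (g (sh n 0 (-1/2)) - g (sh n 0 (1/2))) else 0)"

definition CT :: "gridfun \<Rightarrow> gridfun" where
  "CT f k = (if k \<in> E1set then f (sh k 0 (1/2)) - f (sh k 0 (-1/2))
             else if k \<in> E2set then f (sh k (-1/2) 0) - f (sh k (1/2) 0)
             else 0)"

definition sigma :: "real \<Rightarrow> real \<Rightarrow> real" where
  "sigma \<epsilon> b = Bern \<epsilon> b + Bern \<epsilon> (-b)"

definition Kop :: "real \<Rightarrow> real \<Rightarrow> real \<Rightarrow> real \<Rightarrow> gridfun \<Rightarrow> gridfun" where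
  "Kop \<epsilon> \<beta>1 \<beta>2 h f k =
     (let b1 = \<beta>1*h; b2 = \<beta>2*h; B = (\<lambda>s. complex_of_real (Bern \<epsilon> s)) in
      if k \<in> E1set then
        (of_real (sigma \<epsilon> b2) * f k - B (-b2) * f (sh k 0 1) - B b2 * f (sh k 0 (-1))
         - B b1 * f (sh k (-1/2) (1/2)) + B (-b1) * f (sh k (1/2) (1/2))
         + B b1 * f (sh k (-1/2) (-1/2)) - B (-b1) * f (sh k (1/2) (-1/2))) / of_real (h^2)
      else if k \<in> E2set then
        (of_real (sigma \<epsilon> b1) * f k - B b1 * f (sh k (-1) 0) - B (-b1) * f (sh k 1 0)
         - B (-b2) * f (sh k (-1/2) (1/2)) + B (-b2) * f (sh k (1/2) (1/2))
         + B b2 * f (sh k (-1/2) (-1/2)) - B b2 * f (sh k (1/2) (-1/2))) / of_real (h^2)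
      else 0)"

definition Mop :: "gridfun \<Rightarrow> gridfun" where
  "Mop f k =
     (if k \<in> E1set then 2/3 * f k + 1/6 * (f (sh k 0 1) + f (sh k 0 (-1)))
      else if k \<in> E2set then 2/3 * f k + 1/6 * (f (sh k 1 0) + f (sh k (-1) 0))
      else 0)"

definition Aop :: "real \<Rightarrow> real \<Rightarrow> real \<Rightarrow> real \<Rightarrow> real \<Rightarrow> gridfun \<Rightarrow> gridfun" where
  "Aop \<epsilon> \<beta>1 \<beta>2 h \<gamma> f = (\<lambda>k. Kop \<epsilon> \<beta>1 \<beta>2 h f k + of_real \<gamma> * Mop f k)"

definition Aaux :: "real \<Rightarrow> real \<Rightarrow> real \<Rightarrow> real \<Rightarrow> real \<Rightarrow> gridfun \<Rightarrow> gridfun" where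
  "Aaux \<epsilon> \<beta>1 \<beta>2 h \<gamma> f = GT (Aop \<epsilon> \<beta>1 \<beta>2 h \<gamma> (Jgrad \<epsilon> \<beta>1 \<beta>2 h f))"

definition phi :: "(real \<times> real) set \<Rightarrow> real \<times> real \<Rightarrow> gridfun" where
  "phi S \<theta> k = (if k \<in> S then exp (\<i> * complex_of_real (fst \<theta> * fst k + snd \<theta> * snd k)) else 0)"

definition FE :: "real \<times> real \<Rightarrow> gridfun set" where
  "FE \<theta> = {f. \<exists>a c. f = (\<lambda>k. a * phi E1set \<theta> k + c * phi E2set \<theta> k)}"

definition psiJ :: "real \<Rightarrow> real \<Rightarrow> real \<Rightarrow> real \<Rightarrow> real \<times> real \<Rightarrow> gridfun" where
  "psiJ \<epsilon> \<beta>1 \<beta>2 h \<theta> = Jgrad \<epsilon> \<beta>1 \<beta>2 h (phi Nset \<theta>)"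

definition psis :: "real \<times> real \<Rightarrow> gridfun" where
  "psis \<theta> = CT (phi Fset \<theta>)"

definition spanN :: "real \<times> real \<Rightarrow> gridfun set" where
  "spanN \<theta> = {f. \<exists>c. f = (\<lambda>k. c * phi Nset \<theta> k)}"

definition AauxInv :: "real \<Rightarrow> real \<Rightarrow> real \<Rightarrow> real \<Rightarrow> real \<Rightarrow> real \<times> real \<Rightarrow> gridfun \<Rightarrow> gridfun" where
  "AauxInv \<epsilon> \<beta>1 \<beta>2 h \<gamma> \<theta> g = (THE u. u \<in> spanN \<theta> \<and> Aaux \<epsilon> \<beta>1 \<beta>2 h \<gamma> u = g)"

definition Skc :: "real \<Rightarrow> real \<Rightarrow> real \<Rightarrow> real \<Rightarrow> real \<Rightarrow> real \<times> real \<Rightarrow> (gridfun \<Rightarrow> gridfun)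
                    \<Rightarrow> gridfun \<Rightarrow> gridfun" where
  "Skc \<epsilon> \<beta>1 \<beta>2 h \<gamma> \<theta> S f =
     (let u = AauxInv \<epsilon> \<beta>1 \<beta>2 h \<gamma> \<theta> (GT (Aop \<epsilon> \<beta>1 \<beta>2 h \<gamma> f));
          v = Jgrad \<epsilon> \<beta>1 \<beta>2 h (\<lambda>k. u k - S u k)
      in (\<lambda>k. f k - v k))"

definition transl_inv_lin :: "(gridfun \<Rightarrow> gridfun) \<Rightarrow> bool" where
  "transl_inv_lin S \<longleftrightarrow>
     (\<forall>f g. S (\<lambda>k. f k + g k) = (\<lambda>k. S f k + S g k)) \<and>
     (\<forall>c f. S (\<lambda>k. c * f k) = (\<lambda>k. c * S f k)) \<and>
     (\<forall>m1 m2 f. m1 \<in> \<int> \<and> m2 \<in> \<int> \<longrightarrow>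
        S (\<lambda>k. f (sh k m1 m2)) = (\<lambda>k. S f (sh k m1 m2)))"

definition Dsym :: "real \<Rightarrow> real \<Rightarrow> real \<Rightarrow> real \<Rightarrow> real \<times> real \<Rightarrow> complex" where
  "Dsym \<epsilon> \<beta>1 \<beta>2 h \<theta> =
     (let b1 = \<beta>1*h; b2 = \<beta>2*h; t1 = fst \<theta>; t2 = snd \<theta>;
          s1 = sin (t1/2); s2 = sin (t2/2) in
      complex_of_real ((2 + cos t2) * s1^2 * sigma \<epsilon> b1 + (2 + cos t1) * s2^2 * sigma \<epsilon> b2)
      - \<i>/2 * complex_of_real (sin t1 * b1 * (2 + cos t2))
      - \<i>/2 * complex_of_real (sin t2 * b2 * (2 + cos t1)))"

end

theory Submission
  imports Defs "HOL-Analysis.Analysis"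
begin


lemma Bern_formula:
  assumes e: "\<epsilon> > 0" and s: "s \<noteq> 0"
  shows "Bern \<epsilon> s = s / (exp (s/\<epsilon>) - 1)"
proof -
  have d: "((\<lambda>x. \<epsilon>/s * exp (s*x/\<epsilon>)) has_real_derivative exp (s*x/\<epsilon>)) (at x within A)" for x A
    using e s by (auto intro!: derivative_eq_intros)
  have "((\<lambda>x. exp (s*x/\<epsilon>)) has_integral (\<epsilon>/s * exp (s*1/\<epsilon>) - \<epsilon>/s * exp (s*0/\<epsilon>))) {0..1}"
    apply (rule fundamental_theorem_of_calculus)
     apply simp
    using d[unfolded has_real_derivative_iff_has_vector_derivative] apply blast
    done
  hence "integral {0..1} (\<lambda>x. exp (s*x/\<epsilon>)) = \<epsilon>/s * (exp (s/\<epsilon>) - 1)"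
    by (simp add: integral_unique right_diff_distrib)
  moreover have "exp (s/\<epsilon>) \<noteq> 1" using e s by simp
  ultimately have "integral {0..1} (\<lambda>x. exp (s*x/\<epsilon>)) \<noteq> 0" using e s by simp
  with \<open>integral {0..1} (\<lambda>x. exp (s*x/\<epsilon>)) = \<epsilon>/s * (exp (s/\<epsilon>) - 1)\<close>
  show ?thesis using e s unfolding Bern_def by (simp add: field_simps)
qed

lemma Bern_zero: "Bern \<epsilon> 0 = \<epsilon>"
  unfolding Bern_def by simp

lemma Bern_pos: assumes "\<epsilon> > 0" shows "Bern \<epsilon> s > 0"
proof (cases "s = 0")
  case True thus ?thesis using assms by (simp add: Bern_zero)
next
  case False
  show ?thesis
  proof (cases "s > 0")
    case True
    hence "exp (s/\<epsilon>) > 1" using assms by simp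
    thus ?thesis using True False assms by (simp add: Bern_formula)
  next
    case f2: False
    hence "s < 0" using False by simp
    hence "exp (s/\<epsilon>) < 1" using assms by (simp add: divide_neg_pos)
    thus ?thesis using \<open>s<0\<close> False assms by (simp add: Bern_formula divide_neg_neg)
  qed
qed

lemma Bern_diff: assumes "\<epsilon> > 0" shows "Bern \<epsilon> (-s) = Bern \<epsilon> s + s"
proof (cases "s = 0")
  case True thus ?thesis by simp
next
  case False
  have "exp (s/\<epsilon>) \<noteq> 1" using assms False by simp
  moreover have "exp (-s/\<epsilon>) = inverse (exp (s/\<epsilon>))" by (simp add: exp_minus)
  ultimately show ?thesis using assms False
    by (simp add: Bern_formula field_simps)
qed


lemma int_step: "x \<in> \<int> \<Longrightarrow> y - x \<in> \<int> \<Longrightarrow> (y::real) \<in> \<int>"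
  by (metis Ints_add diff_add_cancel)

lemma half_not_Int: "(1/2::real) \<notin> \<int>"
proof
  assume "(1/2::real) \<in> \<int>"
  then obtain n where "(1/2::real) = of_int n" by (auto elim: Ints_cases)
  hence "(1::real) = 2 * of_int n" by simp
  hence "(1::int) = 2 * n" by linarith
  thus False by presburger
qed

lemma E1_not_E2: "k \<in> E1set \<Longrightarrow> k \<notin> E2set"
  unfolding E1set_def E2set_def using half_not_Int int_step by force
lemma E2_not_E1: "k \<in> E2set \<Longrightarrow> k \<notin> E1set"
  using E1_not_E2 by blast

lemma memE1:
  assumes a: "k \<in> E1set"
  shows "sh k (-1/2) 0 \<in> Nset" "sh k (1/2) 0 \<in> Nset"
    "sh k 0 1 \<in> E1set" "sh k 0 (-1) \<in> E1set"
    "sh k (-1/2) (1/2) \<in> E2set" "sh k (1/2) (1/2) \<in> E2set"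
    "sh k (-1/2) (-1/2) \<in> E2set" "sh k (1/2) (-1/2) \<in> E2set"
    "sh k 0 (1/2) \<in> Fset" "sh k 0 (-1/2) \<in> Fset"
proof -
  from a have h1: "fst k - 1/2 \<in> \<int>" and h2: "snd k \<in> \<int>" unfolding E1set_def by auto
  show "sh k (-1/2) 0 \<in> Nset" "sh k (1/2) 0 \<in> Nset"
    "sh k 0 1 \<in> E1set" "sh k 0 (-1) \<in> E1set"
    "sh k (-1/2) (1/2) \<in> E2set" "sh k (1/2) (1/2) \<in> E2set"
    "sh k (-1/2) (-1/2) \<in> E2set" "sh k (1/2) (-1/2) \<in> E2set"
    "sh k 0 (1/2) \<in> Fset" "sh k 0 (-1/2) \<in> Fset"
    unfolding E1set_def E2set_def Nset_def Fset_def sh_def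
    by (simp_all, (intro conjI)?; ((rule int_step[OF h1], simp) | (rule int_step[OF h2], simp)))+
qed

lemma memE2:
  assumes a: "k \<in> E2set"
  shows "sh k 0 (-1/2) \<in> Nset" "sh k 0 (1/2) \<in> Nset"
    "sh k 1 0 \<in> E2set" "sh k (-1) 0 \<in> E2set"
    "sh k (-1/2) (1/2) \<in> E1set" "sh k (1/2) (1/2) \<in> E1set"
    "sh k (-1/2) (-1/2) \<in> E1set" "sh k (1/2) (-1/2) \<in> E1set"
    "sh k (1/2) 0 \<in> Fset" "sh k (-1/2) 0 \<in> Fset"
proof -
  from a have h1: "fst k \<in> \<int>" and h2: "snd k - 1/2 \<in> \<int>" unfolding E2set_def by auto
  show "sh k 0 (-1/2) \<in> Nset" "sh k 0 (1/2) \<in> Nset"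
    "sh k 1 0 \<in> E2set" "sh k (-1) 0 \<in> E2set"
    "sh k (-1/2) (1/2) \<in> E1set" "sh k (1/2) (1/2) \<in> E1set"
    "sh k (-1/2) (-1/2) \<in> E1set" "sh k (1/2) (-1/2) \<in> E1set"
    "sh k (1/2) 0 \<in> Fset" "sh k (-1/2) 0 \<in> Fset"
    unfolding E1set_def E2set_def Nset_def Fset_def sh_def
    by (simp_all, (intro conjI)?; ((rule int_step[OF h1], simp) | (rule int_step[OF h2], simp)))+
qed

lemma memN:
  assumes a: "k \<in> Nset"
  shows "sh k (-1/2) 0 \<in> E1set" "sh k (1/2) 0 \<in> E1set"
    "sh k 0 (-1/2) \<in> E2set" "sh k 0 (1/2) \<in> E2set"
proof -
  from a have h1: "fst k \<in> \<int>" and h2: "snd k \<in> \<int>" unfolding Nset_def by auto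
  show "sh k (-1/2) 0 \<in> E1set" "sh k (1/2) 0 \<in> E1set"
    "sh k 0 (-1/2) \<in> E2set" "sh k 0 (1/2) \<in> E2set"
    unfolding E1set_def E2set_def Nset_def Fset_def sh_def
    by (simp_all, (intro conjI)?; ((rule int_step[OF h1], simp) | (rule int_step[OF h2], simp)))+
qed

definition ex :: "real \<Rightarrow> complex" where "ex x = exp (\<i> * complex_of_real x)"
definition ee :: "real \<times> real \<Rightarrow> real \<times> real \<Rightarrow> complex" where
  "ee t k = ex (fst t * fst k + snd t * snd k)"
definition w1 :: "real \<times> real \<Rightarrow> complex" where "w1 t = ex (fst t / 2)"
definition w2 :: "real \<times> real \<Rightarrow> complex" where "w2 t = ex (snd t / 2)"

lemma ex_add: "ex (x + y) = ex x * ex y"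
  unfolding ex_def by (simp add: distrib_left exp_add)
lemma ex_neg: "ex (- x) = inverse (ex x)"
  unfolding ex_def by (simp add: exp_minus)
lemma ex_nz: "ex x \<noteq> 0" unfolding ex_def by simp

lemma ee_sh: "ee t (sh k a c) = ee t k * ex (fst t * a) * ex (snd t * c)"
  unfolding ee_def sh_def by (simp add: ex_add[symmetric] algebra_simps)

lemma exh: "ex (x * (1/2)) = ex (x/2)" "ex (x * (-1/2)) = inverse (ex (x/2))"
   "ex (x * 1) = ex (x/2)^2" "ex (x * (-1)) = inverse (ex (x/2))^2" "ex (x * 0) = 1"
proof -
  show "ex (x * (1/2)) = ex (x/2)" by simp
  show "ex (x * (-1/2)) = inverse (ex (x/2))" by (simp add: ex_neg[symmetric])
  have "ex (x * 1) = ex (x/2 + x/2)" by simp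
  thus "ex (x * 1) = ex (x/2)^2" by (simp only: ex_add power2_eq_square)
  moreover have "ex (x * (-1)) = inverse (ex (x*1))" by (simp add: ex_neg[symmetric])
  ultimately show "ex (x * (-1)) = inverse (ex (x/2))^2" by (simp add: power_inverse)
  show "ex (x * 0) = 1" by (simp add: ex_def)
qed

lemmas ee_shs = ee_sh[of _ _ "1/2" 0] ee_sh[of _ _ "-1/2" 0] ee_sh[of _ _ 0 "1/2"] ee_sh[of _ _ 0 "-1/2"]
  ee_sh[of _ _ "1/2" "1/2"] ee_sh[of _ _ "-1/2" "1/2"] ee_sh[of _ _ "1/2" "-1/2"] ee_sh[of _ _ "-1/2" "-1/2"]
  ee_sh[of _ _ 1 0] ee_sh[of _ _ "-1" 0] ee_sh[of _ _ 0 1] ee_sh[of _ _ 0 "-1"]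

lemmas ee_shs' = ee_shs[unfolded exh, folded w1_def w2_def, simplified]
lemmas ee_shs'' = ee_shs[unfolded exh, folded w1_def w2_def, simplified mult_1_right power_one_right]

lemma phi_ee: "phi S t k = (if k \<in> S then ee t k else 0)"
  unfolding phi_def ee_def ex_def by simp

lemma K0:
  fixes x y P1 P2 b1 b2 c1 c2 :: complex
  assumes "x \<noteq> 0" "y \<noteq> 0"
  defines "u \<equiv> inverse x" and "v \<equiv> inverse y"
  defines "M1 \<equiv> P1 + b1" and "M2 \<equiv> P2 + b2"
  shows "(u - x) * ((P2+M2) * c1 - M2 * y^2 * c1 - P2 * v^2 * c1
   - P1 * u * y * c2 + M1 * x * y * c2 + P1 * u * v * c2 - M1 * x * v * c2)
   + (v - y) * ((P1+M1) * c2 - P1 * u^2 * c2 - M1 * x^2 * c2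
   - M2 * u * y * c1 + M2 * x * y * c1 + P2 * u * v * c1 - P2 * x * v * c1) = 0"
  unfolding u_def v_def M1_def M2_def using assms(1,2)
  by (simp add: field_simps) algebra

lemma Mpart:
  fixes x y P1 P2 b1 b2 c :: complex
  assumes "x \<noteq> 0" "y \<noteq> 0"
  defines "u \<equiv> inverse x" and "v \<equiv> inverse y"
  defines "a1 \<equiv> c * (- P1 * u + (P1+b1) * x)" and "a2 \<equiv> c * (- P2 * v + (P2+b2) * y)"
  shows "(u - x) * (2/3 * a1 + 1/6 * (y^2 * a1 + v^2 * a1))
       + (v - y) * (2/3 * a2 + 1/6 * (x^2 * a2 + u^2 * a2))
   = 2/3 * (((2 + (y^2+v^2)/2) * (- ((x-u)^2)/4) * (P1+(P1+b1)) + (2 + (x^2+u^2)/2) * (- ((y-v)^2)/4) * (P2+(P2+b2)))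
      - (x^2-u^2)/4 * b1 * (2 + (y^2+v^2)/2) - (y^2-v^2)/4 * b2 * (2 + (x^2+u^2)/2)) * c"
  unfolding u_def v_def a1_def a2_def using assms(1,2)
  by (simp add: field_simps) algebra

lemma Mpart2:
  fixes x y :: complex
  assumes "x \<noteq> 0" "y \<noteq> 0"
  defines "u \<equiv> inverse x" and "v \<equiv> inverse y"
  defines "a1 \<equiv> y - v" and "a2 \<equiv> u - x"
  shows "(u - x) * (2/3 * a1 + 1/6 * (y^2 * a1 + v^2 * a1))
       + (v - y) * (2/3 * a2 + 1/6 * (x^2 * a2 + u^2 * a2))
   = 4/3 * ((-(x-u)*(y-v)/4) * ((y^2+v^2)/2 - (x^2+u^2)/2))"
  unfolding u_def v_def a1_def a2_def using assms(1,2)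
  by (simp add: field_simps)

lemmas memE1s = memE1 memE1[simplified]
lemmas memE2s = memE2 memE2[simplified]
lemmas memNs = memN memN[simplified]
lemmas ee_shss = ee_shs'' ee_shs'

definition modal :: "real \<times> real \<Rightarrow> complex \<Rightarrow> complex \<Rightarrow> gridfun" where
  "modal t a1 a2 k = (if k \<in> E1set then a1 * ee t k else if k \<in> E2set then a2 * ee t k else 0)"

abbreviation Bc where "Bc \<epsilon> s \<equiv> complex_of_real (Bern \<epsilon> s)"

definition J1 where "J1 \<epsilon> \<beta>1 h t = - Bc \<epsilon> (\<beta>1*h) * inverse (w1 t) + Bc \<epsilon> (-(\<beta>1*h)) * w1 t"
definition J2 where "J2 \<epsilon> \<beta>2 h t = - Bc \<epsilon> (\<beta>2*h) * inverse (w2 t) + Bc \<epsilon> (-(\<beta>2*h)) * w2 t"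

lemma Jgrad_phiN: "Jgrad \<epsilon> \<beta>1 \<beta>2 h (phi Nset t) = modal t (J1 \<epsilon> \<beta>1 h t) (J2 \<epsilon> \<beta>2 h t)"
proof
  fix k
  consider "k \<in> E1set" | "k \<in> E2set" | "k \<notin> E1set \<and> k \<notin> E2set" by blast
  thus "Jgrad \<epsilon> \<beta>1 \<beta>2 h (phi Nset t) k = modal t (J1 \<epsilon> \<beta>1 h t) (J2 \<epsilon> \<beta>2 h t) k"
  proof cases
    case 1 thus ?thesis unfolding Jgrad_def modal_def phi_ee J1_def
      by (simp add: memE1s ee_shss algebra_simps)
  next
    case 2 thus ?thesis unfolding Jgrad_def modal_def phi_ee J2_def
      by (simp add: memE2s E1_not_E2 E2_not_E1 ee_shss algebra_simps)
  next
    case 3 thus ?thesis unfolding Jgrad_def modal_def by simp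
  qed
qed

lemma Jgrad_scale: "Jgrad \<epsilon> \<beta>1 \<beta>2 h (\<lambda>k. c * f k) = (\<lambda>k. c * Jgrad \<epsilon> \<beta>1 \<beta>2 h f k)"
  unfolding Jgrad_def by (auto simp: algebra_simps)

lemma modal_scale: "(\<lambda>k. c * modal t a1 a2 k) = modal t (c*a1) (c*a2)"
  unfolding modal_def by auto

lemma psis_modal: "psis t = modal t (w2 t - inverse (w2 t)) (inverse (w1 t) - w1 t)"
proof
  fix k
  consider "k \<in> E1set" | "k \<in> E2set" | "k \<notin> E1set \<and> k \<notin> E2set" by blast
  thus "psis t k = modal t (w2 t - inverse (w2 t)) (inverse (w1 t) - w1 t) k"
  proof cases
    case 1 thus ?thesis unfolding psis_def CT_def modal_def phi_ee
      by (simp add: memE1s ee_shss algebra_simps)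
  next
    case 2 thus ?thesis unfolding psis_def CT_def modal_def phi_ee
      by (simp add: memE2s E1_not_E2 E2_not_E1 ee_shss algebra_simps)
  next
    case 3 thus ?thesis unfolding psis_def CT_def modal_def by simp
  qed
qed

definition GS where "GS t a1 a2 = (inverse (w1 t) - w1 t) * a1 + (inverse (w2 t) - w2 t) * a2"

lemma GT_modal: "GT (modal t a1 a2) = (\<lambda>k. GS t a1 a2 * phi Nset t k)"
proof
  fix k
  show "GT (modal t a1 a2) k = GS t a1 a2 * phi Nset t k"
  proof (cases "k \<in> Nset")
    case True thus ?thesis unfolding GT_def modal_def phi_ee GS_def
      by (simp add: memNs E1_not_E2 E2_not_E1 ee_shss algebra_simps)
  next
    case False thus ?thesis unfolding GT_def phi_ee by simp
  qed
qed

definition K1 where "K1 \<epsilon> \<beta>1 \<beta>2 h t a1 a2 =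
  (of_real (sigma \<epsilon> (\<beta>2*h)) * a1 - Bc \<epsilon> (-(\<beta>2*h)) * w2 t ^ 2 * a1 - Bc \<epsilon> (\<beta>2*h) * inverse (w2 t) ^ 2 * a1
   - Bc \<epsilon> (\<beta>1*h) * inverse (w1 t) * w2 t * a2 + Bc \<epsilon> (-(\<beta>1*h)) * w1 t * w2 t * a2
   + Bc \<epsilon> (\<beta>1*h) * inverse (w1 t) * inverse (w2 t) * a2 - Bc \<epsilon> (-(\<beta>1*h)) * w1 t * inverse (w2 t) * a2)"
definition M1 where "M1 t a1 = 2/3 * a1 + 1/6 * (w2 t ^ 2 * a1 + inverse (w2 t) ^ 2 * a1)"
definition A1 where "A1 \<epsilon> \<beta>1 \<beta>2 h \<gamma> t a1 a2 = K1 \<epsilon> \<beta>1 \<beta>2 h t a1 a2 / of_real (h^2) + of_real \<gamma> * M1 t a1"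

definition K2 where "K2 \<epsilon> \<beta>1 \<beta>2 h t a1 a2 =
  (of_real (sigma \<epsilon> (\<beta>1*h)) * a2 - Bc \<epsilon> (\<beta>1*h) * inverse (w1 t) ^ 2 * a2 - Bc \<epsilon> (-(\<beta>1*h)) * w1 t ^ 2 * a2
   - Bc \<epsilon> (-(\<beta>2*h)) * inverse (w1 t) * w2 t * a1 + Bc \<epsilon> (-(\<beta>2*h)) * w1 t * w2 t * a1
   + Bc \<epsilon> (\<beta>2*h) * inverse (w1 t) * inverse (w2 t) * a1 - Bc \<epsilon> (\<beta>2*h) * w1 t * inverse (w2 t) * a1)"
definition M2 where "M2 t a2 = 2/3 * a2 + 1/6 * (w1 t ^ 2 * a2 + inverse (w1 t) ^ 2 * a2)"
definition A2 where "A2 \<epsilon> \<beta>1 \<beta>2 h \<gamma> t a1 a2 = K2 \<epsilon> \<beta>1 \<beta>2 h t a1 a2 / of_real (h^2) + of_real \<gamma> * M2 t a2"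

lemma Aop_modal: "Aop \<epsilon> \<beta>1 \<beta>2 h \<gamma> (modal t a1 a2) =
   modal t (A1 \<epsilon> \<beta>1 \<beta>2 h \<gamma> t a1 a2) (A2 \<epsilon> \<beta>1 \<beta>2 h \<gamma> t a1 a2)"
proof
  fix k
  consider "k \<in> E1set" | "k \<in> E2set" | "k \<notin> E1set \<and> k \<notin> E2set" by blast
  thus "Aop \<epsilon> \<beta>1 \<beta>2 h \<gamma> (modal t a1 a2) k = modal t (A1 \<epsilon> \<beta>1 \<beta>2 h \<gamma> t a1 a2) (A2 \<epsilon> \<beta>1 \<beta>2 h \<gamma> t a1 a2) k"
  proof cases
    case 1 thus ?thesis unfolding Aop_def Kop_def Mop_def modal_def A1_def K1_def M1_def Let_def
      by (simp add: memE1s E1_not_E2 E2_not_E1 ee_shss algebra_simps add_divide_distrib diff_divide_distrib)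
  next
    case 2 thus ?thesis unfolding Aop_def Kop_def Mop_def modal_def A2_def K2_def M2_def Let_def
      by (simp add: memE2s E1_not_E2 E2_not_E1 ee_shss algebra_simps add_divide_distrib diff_divide_distrib)
  next
    case 3 thus ?thesis unfolding Aop_def Kop_def Mop_def modal_def by simp
  qed
qed


lemma comb: "a*K1 + b*K2 = 0 \<Longrightarrow> a*(K1/hh + g*m1) + b*(K2/hh + g*m2) = g*(a*m1 + b*m2)"
  for a b K1 K2 hh g m1 m2 :: complex
proof -
  assume K: "a*K1 + b*K2 = 0"
  have "a*(K1/hh) + b*(K2/hh) = (a*K1 + b*K2)/hh" by (simp add: add_divide_distrib)
  hence "a*(K1/hh) + b*(K2/hh) = 0" using K by simp
  thus ?thesis by (simp add: algebra_simps)
qed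

lemma GS_K:
  assumes e: "\<epsilon> > 0"
  shows "GS t (K1 \<epsilon> \<beta>1 \<beta>2 h t a1 a2) (K2 \<epsilon> \<beta>1 \<beta>2 h t a1 a2) = 0"
proof -
  have w1: "w1 t \<noteq> 0" and w2: "w2 t \<noteq> 0" unfolding w1_def w2_def by (simp_all add: ex_nz)
  have b1: "Bc \<epsilon> (-(\<beta>1*h)) = Bc \<epsilon> (\<beta>1*h) + of_real (\<beta>1*h)" using Bern_diff[OF e] by simp
  have b2: "Bc \<epsilon> (-(\<beta>2*h)) = Bc \<epsilon> (\<beta>2*h) + of_real (\<beta>2*h)" using Bern_diff[OF e] by simp
  have s1: "complex_of_real (sigma \<epsilon> (\<beta>1*h)) = Bc \<epsilon> (\<beta>1*h) + (Bc \<epsilon> (\<beta>1*h) + of_real (\<beta>1*h))"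
    unfolding sigma_def using b1 by simp
  have s2: "complex_of_real (sigma \<epsilon> (\<beta>2*h)) = Bc \<epsilon> (\<beta>2*h) + (Bc \<epsilon> (\<beta>2*h) + of_real (\<beta>2*h))"
    unfolding sigma_def using b2 by simp
  show ?thesis unfolding GS_def K1_def K2_def s1 s2 b1 b2
    by (rule K0[OF w1 w2])
qed

lemma GS_A:
  assumes e: "\<epsilon> > 0"
  shows "GS t (A1 \<epsilon> \<beta>1 \<beta>2 h \<gamma> t a1 a2) (A2 \<epsilon> \<beta>1 \<beta>2 h \<gamma> t a1 a2) = of_real \<gamma> * GS t (M1 t a1) (M2 t a2)"
  using GS_K[OF e, of t \<beta>1 \<beta>2 h a1 a2] unfolding GS_def A1_def A2_def by (rule comb)


lemma w_cos: "complex_of_real (cos x) = (ex (x/2)^2 + inverse (ex (x/2))^2)/2"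
proof -
  have "ex x = ex (x/2)^2" using exh(3)[of x] by simp
  moreover have "ex (-x) = inverse (ex (x/2))^2" using exh(4)[of x] by simp
  ultimately show ?thesis unfolding ex_def by (simp add: cos_exp_eq cos_of_real[symmetric])
qed
lemma w_sin: "complex_of_real (sin x) = (ex (x/2)^2 - inverse (ex (x/2))^2)/(2*\<i>)"
proof -
  have "ex x = ex (x/2)^2" using exh(3)[of x] by simp
  moreover have "ex (-x) = inverse (ex (x/2))^2" using exh(4)[of x] by simp
  ultimately show ?thesis unfolding ex_def by (simp add: sin_exp_eq sin_of_real[symmetric])
qed
lemma w_sinh: "complex_of_real (sin (x/2)) = (ex (x/2) - inverse (ex (x/2)))/(2*\<i>)"
  unfolding ex_def by (simp add: sin_exp_eq sin_of_real[symmetric] exp_minus)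


lemma D_form: "Dsym \<epsilon> \<beta>1 \<beta>2 h t =
   ((2 + of_real (cos (snd t))) * of_real (sin (fst t/2))^2 * of_real (sigma \<epsilon> (\<beta>1*h))
    + (2 + of_real (cos (fst t))) * of_real (sin (snd t/2))^2 * of_real (sigma \<epsilon> (\<beta>2*h)))
   - (\<i>/2 * of_real (sin (fst t))) * of_real (\<beta>1*h) * (2 + of_real (cos (snd t)))
   - (\<i>/2 * of_real (sin (snd t))) * of_real (\<beta>2*h) * (2 + of_real (cos (fst t)))"
  unfolding Dsym_def Let_def by (simp add: field_simps)

lemma sinh_sq: "complex_of_real (sin (x/2))^2 = - ((ex (x/2) - inverse (ex (x/2)))^2) / 4"
  unfolding w_sinh by (simp add: power_divide power_mult_distrib)
lemma isin: "\<i>/2 * complex_of_real (sin x) = (ex (x/2)^2 - inverse (ex (x/2))^2) / 4"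
  unfolding w_sin by (simp add: field_simps)

lemma alg1:
  assumes e: "\<epsilon> > 0"
  shows "GS t (A1 \<epsilon> \<beta>1 \<beta>2 h \<gamma> t (c * J1 \<epsilon> \<beta>1 h t) (c * J2 \<epsilon> \<beta>2 h t))
                (A2 \<epsilon> \<beta>1 \<beta>2 h \<gamma> t (c * J1 \<epsilon> \<beta>1 h t) (c * J2 \<epsilon> \<beta>2 h t))
        = (2 * of_real \<gamma> / 3 * Dsym \<epsilon> \<beta>1 \<beta>2 h t) * c"
proof -
  have w1: "w1 t \<noteq> 0" and w2: "w2 t \<noteq> 0" unfolding w1_def w2_def by (simp_all add: ex_nz)
  have b1: "Bc \<epsilon> (-(\<beta>1*h)) = Bc \<epsilon> (\<beta>1*h) + of_real (\<beta>1*h)" using Bern_diff[OF e] by simp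
  have b2: "Bc \<epsilon> (-(\<beta>2*h)) = Bc \<epsilon> (\<beta>2*h) + of_real (\<beta>2*h)" using Bern_diff[OF e] by simp
  have s1: "complex_of_real (sigma \<epsilon> (\<beta>1*h)) = Bc \<epsilon> (\<beta>1*h) + (Bc \<epsilon> (\<beta>1*h) + of_real (\<beta>1*h))"
    unfolding sigma_def using b1 by simp
  have s2: "complex_of_real (sigma \<epsilon> (\<beta>2*h)) = Bc \<epsilon> (\<beta>2*h) + (Bc \<epsilon> (\<beta>2*h) + of_real (\<beta>2*h))"
    unfolding sigma_def using b2 by simp
  have c1: "complex_of_real (cos (fst t)) = (w1 t^2 + inverse (w1 t)^2)/2" unfolding w1_def by (rule w_cos)
  have c2: "complex_of_real (cos (snd t)) = (w2 t^2 + inverse (w2 t)^2)/2" unfolding w2_def by (rule w_cos)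
  have i1: "\<i>/2 * complex_of_real (sin (fst t)) = (w1 t^2 - inverse (w1 t)^2)/4" unfolding w1_def by (rule isin)
  have i2: "\<i>/2 * complex_of_real (sin (snd t)) = (w2 t^2 - inverse (w2 t)^2)/4" unfolding w2_def by (rule isin)
  have h1: "complex_of_real (sin (fst t/2))^2 = - ((w1 t - inverse (w1 t))^2)/4" unfolding w1_def by (rule sinh_sq)
  have h2: "complex_of_real (sin (snd t/2))^2 = - ((w2 t - inverse (w2 t))^2)/4" unfolding w2_def by (rule sinh_sq)
  have "GS t (A1 \<epsilon> \<beta>1 \<beta>2 h \<gamma> t (c * J1 \<epsilon> \<beta>1 h t) (c * J2 \<epsilon> \<beta>2 h t))
                (A2 \<epsilon> \<beta>1 \<beta>2 h \<gamma> t (c * J1 \<epsilon> \<beta>1 h t) (c * J2 \<epsilon> \<beta>2 h t))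
      = of_real \<gamma> * GS t (M1 t (c * J1 \<epsilon> \<beta>1 h t)) (M2 t (c * J2 \<epsilon> \<beta>2 h t))"
    by (rule GS_A[OF e])
  also have "GS t (M1 t (c * J1 \<epsilon> \<beta>1 h t)) (M2 t (c * J2 \<epsilon> \<beta>2 h t)) = 2/3 * Dsym \<epsilon> \<beta>1 \<beta>2 h t * c"
    unfolding GS_def M1_def M2_def J1_def J2_def b1 b2 D_form s1 s2 c1 c2 i1 i2 h1 h2
    by (rule Mpart[OF w1 w2])
  finally show ?thesis by simp
qed

lemma alg2:
  assumes e: "\<epsilon> > 0"
  shows "GS t (A1 \<epsilon> \<beta>1 \<beta>2 h \<gamma> t (w2 t - inverse (w2 t)) (inverse (w1 t) - w1 t))
              (A2 \<epsilon> \<beta>1 \<beta>2 h \<gamma> t (w2 t - inverse (w2 t)) (inverse (w1 t) - w1 t))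
     = of_real \<gamma> * (4/3 * of_real (sin (fst t / 2) * sin (snd t / 2) * (cos (snd t) - cos (fst t))))"
proof -
  have w1: "w1 t \<noteq> 0" and w2: "w2 t \<noteq> 0" unfolding w1_def w2_def by (simp_all add: ex_nz)
  have c1: "complex_of_real (cos (fst t)) = (w1 t^2 + inverse (w1 t)^2)/2" unfolding w1_def by (rule w_cos)
  have c2: "complex_of_real (cos (snd t)) = (w2 t^2 + inverse (w2 t)^2)/2" unfolding w2_def by (rule w_cos)
  have h1: "complex_of_real (sin (fst t/2)) = (w1 t - inverse (w1 t))/(2*\<i>)" unfolding w1_def by (rule w_sinh)
  have h2: "complex_of_real (sin (snd t/2)) = (w2 t - inverse (w2 t))/(2*\<i>)" unfolding w2_def by (rule w_sinh)
  have hh: "complex_of_real (sin (fst t / 2) * sin (snd t / 2)) = - (w1 t - inverse (w1 t)) * (w2 t - inverse (w2 t)) / 4"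
    unfolding of_real_mult h1 h2 by (simp add: divide_simps) (use i_squared in algebra)
  have m: "GS t (M1 t (w2 t - inverse (w2 t))) (M2 t (inverse (w1 t) - w1 t)) =
     4/3 * ((- (w1 t - inverse (w1 t)) * (w2 t - inverse (w2 t)) / 4) * ((w2 t^2 + inverse (w2 t)^2)/2 - (w1 t^2 + inverse (w1 t)^2)/2))"
    unfolding GS_def M1_def M2_def by (rule Mpart2[OF w1 w2])
  show ?thesis unfolding GS_A[OF e] m of_real_mult[of "sin (fst t / 2) * sin (snd t / 2)"] hh of_real_diff c1 c2 ..
qed


lemma modal_FE: "modal t a1 a2 \<in> FE t"
  unfolding FE_def mem_Collect_eq
  apply (rule exI[of _ a1], rule exI[of _ a2], rule ext)
  unfolding modal_def phi_ee using E1_not_E2 by auto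

lemma psiJ_modal: "psiJ \<epsilon> \<beta>1 \<beta>2 h t = modal t (J1 \<epsilon> \<beta>1 h t) (J2 \<epsilon> \<beta>2 h t)"
  unfolding psiJ_def by (rule Jgrad_phiN)

lemma phiN00: "phi Nset t (0,0) = 1"
  unfolding phi_def Nset_def by simp

lemma sin_half_zero:
  assumes "x \<in> {-pi/2..<3*pi/2}" "sin (x/2) = 0" shows "x = 0"
proof -
  from assms(2) obtain i :: int where i: "x/2 = of_int i * pi" by (auto simp: sin_zero_iff_int2)
  from assms(1) have "(-1/4) * pi \<le> of_int i * pi" "of_int i * pi < (3/4) * pi" using i by auto
  hence "- 1/4 \<le> (of_int i::real)" "(of_int i::real) < 3/4"
    by (simp_all only: mult_le_cancel_right_pos[OF pi_gt_zero] mult_less_cancel_right_pos[OF pi_gt_zero])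
  hence "i = 0" by linarith
  thus ?thesis using i by simp
qed

lemma D_nz:
  assumes e: "\<epsilon> > 0" and r1: "fst t \<in> {-pi/2..<3*pi/2}" and r2: "snd t \<in> {-pi/2..<3*pi/2}"
    and nz: "t \<noteq> (0,0)"
  shows "Dsym \<epsilon> \<beta>1 \<beta>2 h t \<noteq> 0"
proof -
  define R where "R = (2 + cos (snd t)) * sin (fst t/2)^2 * sigma \<epsilon> (\<beta>1*h) + (2 + cos (fst t)) * sin (snd t/2)^2 * sigma \<epsilon> (\<beta>2*h)"
  have ReD: "Re (Dsym \<epsilon> \<beta>1 \<beta>2 h t) = R" unfolding Dsym_def Let_def R_def by simp
  have sg1: "sigma \<epsilon> (\<beta>1*h) > 0" and sg2: "sigma \<epsilon> (\<beta>2*h) > 0"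
    unfolding sigma_def using Bern_pos[OF e] by (simp_all add: add_pos_pos)
  have c1: "2 + cos (fst t) > 0" and c2: "2 + cos (snd t) > 0" using cos_ge_minus_one[of "fst t"] cos_ge_minus_one[of "snd t"] by linarith+
  have "sin (fst t/2) \<noteq> 0 \<or> sin (snd t/2) \<noteq> 0"
    using sin_half_zero[OF r1] sin_half_zero[OF r2] nz by (cases t) auto
  hence "sin (fst t/2)^2 > 0 \<or> sin (snd t/2)^2 > 0" by auto
  moreover have "sin (fst t/2)^2 \<ge> 0" "sin (snd t/2)^2 \<ge> 0" by simp_all
  ultimately have "R > 0"
  proof -
    assume q: "sin (fst t/2)^2 > 0 \<or> sin (snd t/2)^2 > 0" "sin (fst t/2)^2 \<ge> 0" "sin (snd t/2)^2 \<ge> 0"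
    have n1: "(2 + cos (snd t)) * sin (fst t/2)^2 * sigma \<epsilon> (\<beta>1*h) \<ge> 0"
      using q c2 sg1 by (intro mult_nonneg_nonneg) auto
    have n2: "(2 + cos (fst t)) * sin (snd t/2)^2 * sigma \<epsilon> (\<beta>2*h) \<ge> 0"
      using q c1 sg2 by (intro mult_nonneg_nonneg) auto
    from q(1) show ?thesis
    proof
      assume "sin (fst t/2)^2 > 0"
      hence "(2 + cos (snd t)) * sin (fst t/2)^2 * sigma \<epsilon> (\<beta>1*h) > 0" using c2 sg1 by simp
      thus ?thesis unfolding R_def using n2 by linarith
    next
      assume "sin (snd t/2)^2 > 0"
      hence "(2 + cos (fst t)) * sin (snd t/2)^2 * sigma \<epsilon> (\<beta>2*h) > 0" using c1 sg2 by simp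
      thus ?thesis unfolding R_def using n1 by linarith
    qed
  qed
  thus ?thesis using ReD by auto
qed

lemma S_scale: "transl_inv_lin S \<Longrightarrow> S (\<lambda>k. c * f k) = (\<lambda>k. c * S f k)"
  unfolding transl_inv_lin_def by blast

lemma Aaux_formula:
  assumes e: "\<epsilon> > 0"
  shows "Aaux \<epsilon> \<beta>1 \<beta>2 h \<gamma> (\<lambda>k. c * phi Nset t k) = (\<lambda>k. (2 * of_real \<gamma> / 3 * Dsym \<epsilon> \<beta>1 \<beta>2 h t) * (c * phi Nset t k))"
  unfolding Aaux_def Jgrad_scale Jgrad_phiN modal_scale Aop_modal GT_modal alg1[OF e]
  by (simp add: mult.assoc)

lemma AauxInv_eq:
  assumes e: "\<epsilon> > 0" and L: "2 * of_real \<gamma> / 3 * Dsym \<epsilon> \<beta>1 \<beta>2 h t \<noteq> 0"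
  shows "AauxInv \<epsilon> \<beta>1 \<beta>2 h \<gamma> t (\<lambda>k. q * phi Nset t k)
     = (\<lambda>k. (q / (2 * of_real \<gamma> / 3 * Dsym \<epsilon> \<beta>1 \<beta>2 h t)) * phi Nset t k)"
  unfolding AauxInv_def
proof (rule the_equality)
  let ?L = "2 * of_real \<gamma> / 3 * Dsym \<epsilon> \<beta>1 \<beta>2 h t"
  show "(\<lambda>k. q / ?L * phi Nset t k) \<in> spanN t \<and>
        Aaux \<epsilon> \<beta>1 \<beta>2 h \<gamma> (\<lambda>k. q / ?L * phi Nset t k) = (\<lambda>k. q * phi Nset t k)"
  proof
    show "(\<lambda>k. q / ?L * phi Nset t k) \<in> spanN t" unfolding spanN_def by (rule CollectI, rule exI, rule refl)
    show "Aaux \<epsilon> \<beta>1 \<beta>2 h \<gamma> (\<lambda>k. q / ?L * phi Nset t k) = (\<lambda>k. q * phi Nset t k)"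
      unfolding Aaux_formula[OF e] using L by simp
  qed
  fix u assume u: "u \<in> spanN t \<and> Aaux \<epsilon> \<beta>1 \<beta>2 h \<gamma> u = (\<lambda>k. q * phi Nset t k)"
  then obtain c where c: "u = (\<lambda>k. c * phi Nset t k)" unfolding spanN_def by auto
  with u have "Aaux \<epsilon> \<beta>1 \<beta>2 h \<gamma> (\<lambda>k. c * phi Nset t k) = (\<lambda>k. q * phi Nset t k)" by simp
  hence "(\<lambda>k. ?L * (c * phi Nset t k)) = (\<lambda>k. q * phi Nset t k)"
    by (simp only: Aaux_formula[OF e])
  hence "?L * (c * phi Nset t (0,0)) = q * phi Nset t (0,0)" by metis
  hence "c = q / ?L" using L unfolding phiN00 by (simp add: field_simps)
  thus "u = (\<lambda>k. q / ?L * phi Nset t k)" using c by simp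
qed

lemma aux: "r*p - r*(s*p) = (r*(1-s))*p" for r p s :: complex by (simp add: algebra_simps)

lemma Skc_gen:
  assumes e: "\<epsilon> > 0" and L: "2 * of_real \<gamma> / 3 * Dsym \<epsilon> \<beta>1 \<beta>2 h t \<noteq> 0"
    and S: "transl_inv_lin S" and Sphi: "S (phi Nset t) = (\<lambda>k. s * phi Nset t k)"
    and G: "GT (Aop \<epsilon> \<beta>1 \<beta>2 h \<gamma> f) = (\<lambda>k. q * phi Nset t k)"
  shows "Skc \<epsilon> \<beta>1 \<beta>2 h \<gamma> t S f
     = (\<lambda>k. f k - (q / (2 * of_real \<gamma> / 3 * Dsym \<epsilon> \<beta>1 \<beta>2 h t)) * (1 - s) * psiJ \<epsilon> \<beta>1 \<beta>2 h t k)"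
proof -
  let ?r = "q / (2 * of_real \<gamma> / 3 * Dsym \<epsilon> \<beta>1 \<beta>2 h t)"
  have Su: "S (\<lambda>k. ?r * phi Nset t k) = (\<lambda>k. ?r * (s * phi Nset t k))"
  proof -
    have "S (\<lambda>k. ?r * phi Nset t k) = (\<lambda>k. ?r * S (phi Nset t) k)" by (rule S_scale[OF S])
    thus ?thesis using Sphi by simp
  qed
  have d: "(\<lambda>k. ?r * phi Nset t k - ?r * (s * phi Nset t k)) = (\<lambda>k. (?r * (1 - s)) * phi Nset t k)"
    by (simp only: aux)
  show ?thesis unfolding Skc_def Let_def G AauxInv_eq[OF e L] Su d Jgrad_scale psiJ_def[symmetric]
    by (simp add: mult.assoc)
qed


theorem mainTheorem5:
  fixes \<epsilon> \<beta>1 \<beta>2 h \<gamma> :: real and \<theta> :: "real \<times> real"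
    and S :: "gridfun \<Rightarrow> gridfun" and s :: "real \<times> real \<Rightarrow> complex"
  assumes "\<epsilon> > 0" and "h > 0" and "\<gamma> > 0"
    and "transl_inv_lin S"
    and "\<And>t. S (phi Nset t) = (\<lambda>k. s t * phi Nset t k)"
    and "fst \<theta> \<in> {-pi/2..<3*pi/2}" and "snd \<theta> \<in> {-pi/2..<3*pi/2}" and "\<theta> \<noteq> (0, 0)"
  shows "Dsym \<epsilon> \<beta>1 \<beta>2 h \<theta> \<noteq> 0
    \<and> (\<forall>c. Aaux \<epsilon> \<beta>1 \<beta>2 h \<gamma> (\<lambda>k. c * phi Nset \<theta> k)
           = (\<lambda>k. (2 * of_real \<gamma> / 3 * Dsym \<epsilon> \<beta>1 \<beta>2 h \<theta>) * (c * phi Nset \<theta> k)))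
    \<and> psiJ \<epsilon> \<beta>1 \<beta>2 h \<theta> \<in> FE \<theta> \<and> psis \<theta> \<in> FE \<theta>
    \<and> Skc \<epsilon> \<beta>1 \<beta>2 h \<gamma> \<theta> S (psiJ \<epsilon> \<beta>1 \<beta>2 h \<theta>) = (\<lambda>k. s \<theta> * psiJ \<epsilon> \<beta>1 \<beta>2 h \<theta> k)
    \<and> Skc \<epsilon> \<beta>1 \<beta>2 h \<gamma> \<theta> S (psis \<theta>) =
        (\<lambda>k. (2 * (s \<theta> - 1) * of_real (sin (fst \<theta> / 2) * sin (snd \<theta> / 2)
                 * (cos (snd \<theta>) - cos (fst \<theta>))) / Dsym \<epsilon> \<beta>1 \<beta>2 h \<theta>) * psiJ \<epsilon> \<beta>1 \<beta>2 h \<theta> k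
              + psis \<theta> k)"
proof -
  note e = assms(1)
  have D: "Dsym \<epsilon> \<beta>1 \<beta>2 h \<theta> \<noteq> 0" by (rule D_nz[OF e assms(6,7,8)])
  have g: "complex_of_real \<gamma> \<noteq> 0" using assms(3) by simp
  let ?L = "2 * of_real \<gamma> / 3 * Dsym \<epsilon> \<beta>1 \<beta>2 h \<theta>"
  have L: "?L \<noteq> 0" using D g by simp
  have A: "\<forall>c. Aaux \<epsilon> \<beta>1 \<beta>2 h \<gamma> (\<lambda>k. c * phi Nset \<theta> k)
           = (\<lambda>k. ?L * (c * phi Nset \<theta> k))" using Aaux_formula[OF e] by blast
  have F1: "psiJ \<epsilon> \<beta>1 \<beta>2 h \<theta> \<in> FE \<theta>" unfolding psiJ_modal by (rule modal_FE)
  have F2: "psis \<theta> \<in> FE \<theta>" unfolding psis_modal by (rule modal_FE)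
  have G1: "GT (Aop \<epsilon> \<beta>1 \<beta>2 h \<gamma> (psiJ \<epsilon> \<beta>1 \<beta>2 h \<theta>)) = (\<lambda>k. ?L * phi Nset \<theta> k)"
  proof -
    have "GT (Aop \<epsilon> \<beta>1 \<beta>2 h \<gamma> (psiJ \<epsilon> \<beta>1 \<beta>2 h \<theta>)) = Aaux \<epsilon> \<beta>1 \<beta>2 h \<gamma> (\<lambda>k. 1 * phi Nset \<theta> k)"
      unfolding Aaux_def psiJ_def by simp
    thus ?thesis unfolding Aaux_formula[OF e] by simp
  qed
  have S1: "Skc \<epsilon> \<beta>1 \<beta>2 h \<gamma> \<theta> S (psiJ \<epsilon> \<beta>1 \<beta>2 h \<theta>) = (\<lambda>k. s \<theta> * psiJ \<epsilon> \<beta>1 \<beta>2 h \<theta> k)"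
    unfolding Skc_gen[OF e L assms(4) assms(5) G1] using L by (simp add: algebra_simps)
  let ?X = "sin (fst \<theta> / 2) * sin (snd \<theta> / 2) * (cos (snd \<theta>) - cos (fst \<theta>))"
  have G2: "GT (Aop \<epsilon> \<beta>1 \<beta>2 h \<gamma> (psis \<theta>)) = (\<lambda>k. (of_real \<gamma> * (4/3 * of_real ?X)) * phi Nset \<theta> k)"
    unfolding psis_modal Aop_modal GT_modal alg2[OF e] ..
  have S2: "Skc \<epsilon> \<beta>1 \<beta>2 h \<gamma> \<theta> S (psis \<theta>) =
        (\<lambda>k. (2 * (s \<theta> - 1) * of_real ?X / Dsym \<epsilon> \<beta>1 \<beta>2 h \<theta>) * psiJ \<epsilon> \<beta>1 \<beta>2 h \<theta> k + psis \<theta> k)"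
    unfolding Skc_gen[OF e L assms(4) assms(5) G2]
  proof (rule ext)
    fix k
    show "psis \<theta> k - of_real \<gamma> * (4/3 * of_real ?X) / ?L * (1 - s \<theta>) * psiJ \<epsilon> \<beta>1 \<beta>2 h \<theta> k =
          2 * (s \<theta> - 1) * of_real ?X / Dsym \<epsilon> \<beta>1 \<beta>2 h \<theta> * psiJ \<epsilon> \<beta>1 \<beta>2 h \<theta> k + psis \<theta> k"
      using D g by (simp add: field_simps)
  qed
  show ?thesis using D A F1 F2 S1 S2 by blast
qed

end
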